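(* Every graph $G$ contains a bipartite subgraph $H$ such that $$\kappa(H) \ge \max\{d(G)/4,\ (\chi(G)-1)/8\}.$$
   Context: Graphs are finite and simple; $\kappa$ is vertex connectivity, $\chi$ chromatic number, and $d(G)=|E(G)|/|V(G)|$ the density of a non-null graph $G$. *)

theory Defs
  imports Complex_Main
begin

definition graph :: "'a set \<Rightarrow> 'a set set \<Rightarrow> bool" where
  "graph V E \<longleftrightarrow> finite V \<and> (\<forall>e\<in>E. card e = 2 \<and> e \<subseteq> V)"

definition subgraph :: "'a set \<Rightarrow> 'a set set \<Rightarrow> 'a set \<Rightarrow> 'a set set \<Rightarrow> bool" where
  "subgraph V' E' V E \<longleftrightarrow> graph V' E' \<and> V' \<subseteq> V \<and> E' \<subseteq> E"

definition adj :: "'a set \<Rightarrow> 'a set set \<Rightarrow> 'a \<Rightarrow> 'a \<Rightarrow> bool" where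
  "adj V E x y \<longleftrightarrow> x \<in> V \<and> y \<in> V \<and> {x, y} \<in> E"

definition connected :: "'a set \<Rightarrow> 'a set set \<Rightarrow> bool" where
  "connected V E \<longleftrightarrow> V \<noteq> {} \<and> (\<forall>u\<in>V. \<forall>v\<in>V. (adj V E)\<^sup>*\<^sup>* u v)"

definition delete_vertices :: "'a set \<Rightarrow> 'a set set \<Rightarrow> 'a set \<Rightarrow> 'a set set" where
  "delete_vertices V E X = {e \<in> E. e \<subseteq> V - X}"

definition k_connected :: "'a set \<Rightarrow> 'a set set \<Rightarrow> nat \<Rightarrow> bool" where
  "k_connected V E k \<longleftrightarrow> k < card V \<and>
     (\<forall>X. X \<subseteq> V \<and> card X < k \<longrightarrow> connected (V - X) (delete_vertices V E X))"

text \<open>Vertex connectivity: greatest k such that G is k-connected (0 if none).\<close>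
definition kappa :: "'a set \<Rightarrow> 'a set set \<Rightarrow> nat" where
  "kappa V E = Sup {k. k_connected V E k}"

definition proper_colouring :: "'a set \<Rightarrow> 'a set set \<Rightarrow> nat \<Rightarrow> ('a \<Rightarrow> nat) \<Rightarrow> bool" where
  "proper_colouring V E k c \<longleftrightarrow> c ` V \<subseteq> {..<k} \<and> (\<forall>u v. {u, v} \<in> E \<and> u \<noteq> v \<longrightarrow> c u \<noteq> c v)"

definition chi :: "'a set \<Rightarrow> 'a set set \<Rightarrow> nat" where
  "chi V E = (LEAST k. \<exists>c. proper_colouring V E k c)"

definition bipartite :: "'a set \<Rightarrow> 'a set set \<Rightarrow> bool" where
  "bipartite V E \<longleftrightarrow> (\<exists>A B. A \<inter> B = {} \<and> A \<union> B = V \<and>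
      (\<forall>e\<in>E. card (e \<inter> A) = 1 \<and> card (e \<inter> B) = 1))"

definition density :: "'a set \<Rightarrow> 'a set set \<Rightarrow> real" where
  "density V E = real (card E) / real (card V)"

end

theory Submission
  imports Defs
begin


definition degE :: "'a set set \<Rightarrow> 'a \<Rightarrow> nat" where
  "degE E v = card {e\<in>E. v \<in> e}"

lemma graph_finE: "graph V E \<Longrightarrow> finite E"
  unfolding graph_def by (meson Pow_iff finite_Pow_iff finite_subset subsetI)

lemma handshake:
  assumes "graph V E"
  shows "(\<Sum>v\<in>V. degE E v) = 2 * card E"
proof -
  have fE: "finite E" using graph_finE assms by blast
  have fV: "finite V" using assms unfolding graph_def by blast
  have "(\<Sum>v\<in>V. degE E v) = (\<Sum>v\<in>V. \<Sum>e\<in>E. if v \<in> e then 1 else 0)"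
    unfolding degE_def using fE by (simp add: sum.If_cases Int_def)
  also have "\<dots> = (\<Sum>e\<in>E. \<Sum>v\<in>V. if v \<in> e then 1 else 0)"
    by (rule sum.swap)
  also have "\<dots> = (\<Sum>e\<in>E. card e)"
  proof (rule sum.cong)
    fix e assume "e \<in> E"
    then have "e \<subseteq> V" using assms unfolding graph_def by blast
    then have "V \<inter> {v. v \<in> e} = e" by blast
    then show "(\<Sum>v\<in>V. if v \<in> e then 1 else (0::nat)) = card e"
      using fV by (simp add: sum.If_cases)
  qed simp
  also have "\<dots> = (\<Sum>e\<in>E. 2)"
    by (intro sum.cong refl) (use assms in \<open>auto simp: graph_def\<close>)
  finally show ?thesis by simp
qed

lemma card_edges_le:
  assumes "graph V E"
  shows "card E \<le> card V choose 2"
proof -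
  have "E \<subseteq> {B. B \<subseteq> V \<and> card B = 2}" using assms unfolding graph_def by blast
  moreover have "finite {B. B \<subseteq> V \<and> card B = 2}" 
  proof (rule finite_subset)
    show "{B. B \<subseteq> V \<and> card B = 2} \<subseteq> Pow V" by blast
    show "finite (Pow V)" using assms unfolding graph_def by simp
  qed
  ultimately have "card E \<le> card {B. B \<subseteq> V \<and> card B = 2}" by (rule card_mono[rotated])
  also have "\<dots> = card V choose 2" by (rule n_subsets) (use assms in \<open>simp add: graph_def\<close>)
  finally show ?thesis .
qed

lemma card_remove_vertex:
  assumes "finite F"
  shows "card F = card {e\<in>F. v \<notin> e} + degE F v"
proof -
  have "F = {e\<in>F. v \<notin> e} \<union> {e\<in>F. v \<in> e}" by blast
  then have "card F = card ({e\<in>F. v \<notin> e} \<union> {e\<in>F. v \<in> e})" by simp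
  also have "\<dots> = card {e\<in>F. v \<notin> e} + card {e\<in>F. v \<in> e}"
    by (rule card_Un_disjoint) (use assms in auto)
  finally show ?thesis unfolding degE_def .
qed

lemma deg_le_nbhd:
  assumes "\<forall>e\<in>F. card e = 2 \<and> e \<subseteq> U" "v \<in> U" "finite U"
  shows "degE F v \<le> card U - 1"
proof -
  have "{e\<in>F. v \<in> e} \<subseteq> (\<lambda>x. {v,x}) ` (U - {v})"
  proof
    fix e assume "e \<in> {e\<in>F. v \<in> e}"
    then have "card e = 2" "e \<subseteq> U" "v \<in> e" using assms by auto
    then obtain x y where "e = {x,y}" "x \<noteq> y" by (meson card_2_iff)
    then show "e \<in> (\<lambda>x. {v,x}) ` (U - {v})" using \<open>v\<in>e\<close> \<open>e \<subseteq> U\<close> by auto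
  qed
  then have "degE F v \<le> card ((\<lambda>x. {v,x}) ` (U - {v}))" unfolding degE_def
    using assms(3) by (simp add: card_mono)
  also have "\<dots> \<le> card (U - {v})" by (rule card_image_le) (use assms in auto)
  finally show ?thesis using assms by simp
qed




definition cutE :: "'a set set \<Rightarrow> 'a set \<Rightarrow> 'a set set" where
  "cutE E A = {e\<in>E. card (e \<inter> A) = 1}"

lemma card_pair_Int_1:
  assumes "x \<noteq> y"
  shows "card ({x,y} \<inter> S) = 1 \<longleftrightarrow> (x \<in> S \<longleftrightarrow> y \<notin> S)"
proof (cases "x \<in> S"; cases "y \<in> S")
  assume "x \<in> S" "y \<in> S"
  then have "{x,y} \<inter> S = {x,y}" by blast
  then show ?thesis using assms \<open>x \<in> S\<close> \<open>y \<in> S\<close> by simp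
next
  assume "x \<in> S" "y \<notin> S"
  then have "{x,y} \<inter> S = {x}" by blast
  then show ?thesis using assms \<open>x \<in> S\<close> \<open>y \<notin> S\<close> by simp
next
  assume "x \<notin> S" "y \<in> S"
  then have "{x,y} \<inter> S = {y}" by blast
  then show ?thesis using assms \<open>x \<notin> S\<close> \<open>y \<in> S\<close> by simp
next
  assume "x \<notin> S" "y \<notin> S"
  then have "{x,y} \<inter> S = {}" by blast
  then show ?thesis using assms \<open>x \<notin> S\<close> \<open>y \<notin> S\<close> by simp
qed

lemma graph_subE: "graph V E \<Longrightarrow> F \<subseteq> E \<Longrightarrow> graph V F"
  unfolding graph_def by blast

lemma cut_bipartite:
  assumes "graph V E" "A \<subseteq> V"
  shows "bipartite V (cutE E A)"
  unfolding bipartite_def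
proof (intro exI conjI ballI)
  show "A \<inter> (V - A) = {}" by blast
  show "A \<union> (V - A) = V" using assms(2) by blast
  fix e assume e: "e \<in> cutE E A"
  then show "card (e \<inter> A) = 1" unfolding cutE_def by simp
  have "e \<in> E" using e unfolding cutE_def by simp
  then have ce: "card e = 2" and eV: "e \<subseteq> V" using assms(1) unfolding graph_def by auto
  then have fe: "finite e" using card_ge_0_finite[of e] by simp
  have "e \<inter> (V - A) = e - A" using eV by blast
  then have "card (e \<inter> (V - A)) = card e - card (e \<inter> A)"
    using card_Diff_subset_Int fe by (metis finite_Int)
  then show "card (e \<inter> (V - A)) = 1" using ce \<open>card (e \<inter> A) = 1\<close> by simp
qed

lemma maxcut:
  assumes G: "graph V E"
  shows "\<exists>A. A \<subseteq> V \<and> card E \<le> 2 * card (cutE E A)"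
proof -
  have fE: "finite E" using G graph_finE by blast
  have fV: "finite V" using G unfolding graph_def by blast
  obtain A where AV: "A \<subseteq> V" and Amax: "\<And>B. B \<subseteq> V \<Longrightarrow> card E - card (cutE E A) \<le> card E - card (cutE E B)"
    using ex_has_least_nat[of "\<lambda>A. A \<subseteq> V" "{}" "\<lambda>A. card E - card (cutE E A)"] by blast
  define C where "C = cutE E A"
  have CE: "C \<subseteq> E" unfolding C_def cutE_def by blast
  have fC: "finite C" using CE fE finite_subset by blast
  have loc: "degE E v \<le> 2 * degE C v" if vV: "v \<in> V" for v
  proof -
    define A' where "A' = (if v \<in> A then A - {v} else insert v A)"
    have A'V: "A' \<subseteq> V" unfolding A'_def using AV vV by auto
    define Ev where "Ev = {e\<in>E. v \<in> e}"
    have key: "e \<in> cutE E A' \<longleftrightarrow> (if v \<in> e then e \<notin> C else e \<in> C)" if eE: "e \<in> E" for e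
    proof -
      have "card e = 2" using eE G unfolding graph_def by blast
      then obtain x y where exy: "e = {x,y}" "x \<noteq> y" by (meson card_2_iff)
      show ?thesis
      proof (cases "v \<in> e")
        case True
        then obtain z where ez: "e = {v,z}" "v \<noteq> z" using exy by blast
        have "e \<in> cutE E A' \<longleftrightarrow> (v \<in> A' \<longleftrightarrow> z \<notin> A')"
          unfolding cutE_def using eE ez card_pair_Int_1[OF ez(2), of A'] by simp
        also have "\<dots> \<longleftrightarrow> \<not> (v \<in> A \<longleftrightarrow> z \<notin> A)" unfolding A'_def using ez(2) by auto
        also have "\<dots> \<longleftrightarrow> e \<notin> C"
          unfolding C_def cutE_def using eE ez card_pair_Int_1[OF ez(2), of A] by auto
        finally show ?thesis using True by simp
      next
        case False
        then have "e \<inter> A' = e \<inter> A" unfolding A'_def by auto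
        then show ?thesis unfolding C_def cutE_def using False eE by simp
      qed
    qed
    have C'eq: "cutE E A' = (C - Ev) \<union> (Ev - C)"
    proof
      show "cutE E A' \<subseteq> (C - Ev) \<union> (Ev - C)"
      proof
        fix e assume "e \<in> cutE E A'"
        then have "e \<in> E" unfolding cutE_def by simp
        then show "e \<in> (C - Ev) \<union> (Ev - C)" using key \<open>e \<in> cutE E A'\<close> unfolding Ev_def
          by (cases "v \<in> e") auto
      qed
      show "(C - Ev) \<union> (Ev - C) \<subseteq> cutE E A'"
      proof
        fix e assume e: "e \<in> (C - Ev) \<union> (Ev - C)"
        then have "e \<in> E" using CE unfolding Ev_def by blast
        then show "e \<in> cutE E A'" using key e unfolding Ev_def by (cases "v \<in> e") auto
      qed
    qed
    have fEv: "finite Ev" unfolding Ev_def using fE by simp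
    have c1: "card (cutE E A') = card (C - Ev) + card (Ev - C)"
      unfolding C'eq by (rule card_Un_disjoint) (use fC fEv in auto)
    have "C = (C - Ev) \<union> (C \<inter> Ev)" by blast
    then have c2: "card C = card (C - Ev) + card (C \<inter> Ev)"
      by (metis card_Un_disjoint Diff_disjoint Int_Diff_disjoint fC finite_Diff finite_Int inf_commute)
    have "Ev = (Ev - C) \<union> (C \<inter> Ev)" by blast
    then have c3: "card Ev = card (Ev - C) + card (C \<inter> Ev)"
      by (metis card_Un_disjoint Diff_disjoint Int_Diff_disjoint fEv finite_Diff finite_Int inf_commute)
    have "card E - card C \<le> card E - card (cutE E A')" using Amax[OF A'V] unfolding C_def .
    moreover have "card (cutE E A') \<le> card E" using fE by (intro card_mono) (auto simp: cutE_def)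
    moreover have "card C \<le> card E" using fE CE card_mono by blast
    ultimately have "card (cutE E A') \<le> card C" by linarith
    then have "card (Ev - C) \<le> card (C \<inter> Ev)" using c1 c2 by linarith
    moreover have "degE C v = card (C \<inter> Ev)" unfolding degE_def Ev_def using CE
      by (intro arg_cong[where f=card]) blast
    moreover have "degE E v = card Ev" unfolding degE_def Ev_def by simp
    ultimately show ?thesis using c3 by linarith
  qed
  have GC: "graph V C" using graph_subE[OF G CE] .
  have "2 * card E = (\<Sum>v\<in>V. degE E v)" using handshake[OF G] by simp
  also have "\<dots> \<le> (\<Sum>v\<in>V. 2 * degE C v)" by (rule sum_mono) (use loc in blast)
  also have "\<dots> = 2 * (2 * card C)" using handshake[OF GC] by (simp add: sum_distrib_left[symmetric])
  finally show ?thesis using AV unfolding C_def by auto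
qed




lemma two_card_edges:
  assumes "graph V E"
  shows "2 * card E \<le> card V * (card V - 1)"
proof -
  have "card E \<le> card V choose 2" by (rule card_edges_le[OF assms])
  then have "2 * card E \<le> 2 * (card V * (card V - 1) div 2)" by (simp add: choose_two)
  also have "\<dots> \<le> card V * (card V - 1)" by simp
  finally show ?thesis .
qed

lemma mader:
  fixes \<gamma> :: real
  assumes G: "graph V0 E0" and ne: "V0 \<noteq> {}" and k1: "k \<ge> 1"
    and dens: "real (card E0) = \<gamma> * real (card V0)" and gk: "2 * real k \<le> \<gamma>"
  shows "\<exists>W F. subgraph W F V0 E0 \<and> k_connected W F (k+1)"
proof -
  define P where "P = (\<lambda>p. subgraph (fst p) (snd p) V0 E0 \<and> 2*k \<le> card (fst p) \<and>
       real (card (snd p)) > \<gamma> * (real (card (fst p)) - real k))"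
  have fV0: "finite V0" using G unfolding graph_def by blast
  have n0: "card V0 > 0" using fV0 ne by (simp add: card_gt_0_iff)
  have g0: "\<gamma> \<ge> 2" using k1 gk by linarith
  have "P (V0, E0)"
  proof -
    have "subgraph V0 E0 V0 E0" using G unfolding subgraph_def by blast
    moreover have "2*k \<le> card V0"
    proof -
      have "real (2 * card E0) \<le> real (card V0 * (card V0 - 1))"
        using two_card_edges[OF G] of_nat_le_iff by blast
      then have "2 * \<gamma> * real (card V0) \<le> real (card V0) * (real (card V0) - 1)"
        using dens n0 by (simp add: of_nat_diff)
      then have "2 * \<gamma> \<le> real (card V0) - 1" using n0 by (simp add: mult.commute)
      then show ?thesis using gk by linarith
    qed
    moreover have "real (card E0) > \<gamma> * (real (card V0) - real k)"
      using dens g0 k1 by (simp add: right_diff_distrib)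
    ultimately show ?thesis unfolding P_def by simp
  qed
  then obtain p where Pp: "P p" and pmin: "\<And>q. P q \<Longrightarrow> card (fst p) \<le> card (fst q)"
    using ex_has_least_nat[of P "(V0,E0)" "\<lambda>p. card (fst p)"] by blast
  define W where "W = fst p"
  define F where "F = snd p"
  have sub: "subgraph W F V0 E0" and W2k: "2*k \<le> card W"
    and FW: "real (card F) > \<gamma> * (real (card W) - real k)"
    using Pp unfolding P_def W_def F_def by auto
  have min: "\<And>W' F'. subgraph W' F' V0 E0 \<Longrightarrow> 2*k \<le> card W' \<Longrightarrow>
       real (card F') > \<gamma> * (real (card W') - real k) \<Longrightarrow> card W \<le> card W'"
    using pmin unfolding P_def W_def by fastforce
  have GW: "graph W F" using sub unfolding subgraph_def by blast
  have fW: "finite W" using GW unfolding graph_def by blast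
  have fF: "finite F" using GW graph_finE by blast
  have WV0: "W \<subseteq> V0" and FE0: "F \<subseteq> E0" using sub unfolding subgraph_def by auto
  have Fprops: "\<And>e. e \<in> F \<Longrightarrow> card e = 2 \<and> e \<subseteq> W" using GW unfolding graph_def by blast
  have Wgt: "card W > 2*k"
  proof (rule ccontr)
    assume "\<not> card W > 2*k"
    then have Weq: "card W = 2*k" using W2k by simp
    have "2 * card F \<le> 2*k * (2*k - 1)" using two_card_edges[OF GW] Weq by simp
    then have "real (2 * card F) \<le> real (2*k * (2*k - 1))" using of_nat_le_iff by blast
    then have c1: "2 * real (card F) \<le> 2 * real k * (2 * real k - 1)" using k1 by (simp add: of_nat_diff)
    have "\<gamma> * real k \<ge> 2 * real k * real k" using gk by (simp add: mult_right_mono)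
    moreover have "real (card F) > \<gamma> * real k" using FW Weq by simp
    moreover have c1': "2 * real (card F) \<le> 4 * (real k * real k) - 2 * real k" using c1 by (simp add: algebra_simps)
    moreover have "real k \<ge> 1" using k1 by simp
    ultimately show False by linarith
  qed
  have mindeg: "real (degE F v) > \<gamma>" if vW: "v \<in> W" for v
  proof (rule ccontr)
    assume "\<not> real (degE F v) > \<gamma>"
    then have dle: "real (degE F v) \<le> \<gamma>" by simp
    define W' where "W' = W - {v}"
    define F' where "F' = {e\<in>F. v \<notin> e}"
    have "subgraph W' F' V0 E0"
      unfolding subgraph_def graph_def W'_def F'_def using Fprops fW WV0 FE0 by auto
    moreover have cW': "card W' = card W - 1" unfolding W'_def using vW fW by simp
    then have "2*k \<le> card W'" using Wgt by simp
    moreover have "real (card F') > \<gamma> * (real (card W') - real k)"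
    proof -
      have "card F = card F' + degE F v" unfolding F'_def by (rule card_remove_vertex[OF fF])
      then have "real (card F') = real (card F) - real (degE F v)" by simp
      moreover have "real (card W') = real (card W) - 1" using cW' Wgt by (simp add: of_nat_diff)
      moreover have "\<gamma> * real (card W) = \<gamma> * real (card W') + \<gamma>"
        unfolding \<open>real (card W') = real (card W) - 1\<close> by (simp add: algebra_simps)
      ultimately show ?thesis using FW dle by (simp add: algebra_simps)
    qed
    ultimately have "card W \<le> card W'" by (rule min)
    then show False using cW' Wgt by simp
  qed
  have side: "card U \<ge> 2*k \<and> real (card {e\<in>F. e \<subseteq> U}) \<le> \<gamma> * (real (card U) - real k)"
    if UW: "U \<subseteq> W" and Une: "U \<noteq> W" and yU: "y \<in> U" and yE: "\<And>e. e \<in> F \<Longrightarrow> y \<in> e \<Longrightarrow> e \<subseteq> U" for U y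
  proof -
    define FU where "FU = {e\<in>F. e \<subseteq> U}"
    have fU: "finite U" using UW fW finite_subset by blast
    have "{e\<in>F. y \<in> e} = {e\<in>FU. y \<in> e}" unfolding FU_def using yE by blast
    then have "degE F y = degE FU y" unfolding degE_def by simp
    also have "\<dots> \<le> card U - 1" by (rule deg_le_nbhd) (use Fprops yU fU in \<open>auto simp: FU_def\<close>)
    finally have d1: "degE F y \<le> card U - 1" .
    have "card U \<ge> 1" using yU fU by (metis One_nat_def Suc_leI card_gt_0_iff empty_iff)
    then have "real (degE F y) \<le> real (card U) - 1" using d1 by (metis of_nat_1 of_nat_diff of_nat_le_iff)
    moreover have "real (degE F y) > \<gamma>" using mindeg[of y] yU UW by blast
    ultimately have "real (card U) > 2 * real k" using gk by linarith
    then have cU: "card U \<ge> 2*k" by linarith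
    have subU: "subgraph U FU V0 E0"
      unfolding subgraph_def graph_def FU_def using Fprops fU UW WV0 FE0 by auto
    have "card U < card W" using UW Une fW by (simp add: psubset_card_mono)
    then have "\<not> real (card FU) > \<gamma> * (real (card U) - real k)"
      using min[OF subU cU] by linarith
    then show ?thesis using cU unfolding FU_def by simp
  qed
  have "k_connected W F (k+1)"
    unfolding k_connected_def
  proof (intro conjI allI impI)
    show "k + 1 < card W" using Wgt k1 by simp
    fix X assume XW: "X \<subseteq> W \<and> card X < k + 1"
    then have XW1: "X \<subseteq> W" and cX: "card X \<le> k" by auto
    define FX where "FX = delete_vertices W F X"
    define R where "R = (adj (W - X) FX)\<^sup>*\<^sup>*"
    show "connected (W - X) (delete_vertices W F X)"
    proof (rule ccontr)
      assume nc: "\<not> connected (W - X) (delete_vertices W F X)"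
      have fX: "finite X" using XW1 fW finite_subset by blast
      have "card (W - X) > 0" using card_Diff_subset[OF fX XW1] cX Wgt by simp
      then have "W - X \<noteq> {}" using card_gt_0_iff by blast
      then obtain u w where uW: "u \<in> W - X" and wW: "w \<in> W - X" and nR: "\<not> R u w"
        using nc unfolding connected_def R_def FX_def by blast
      define C where "C = {y \<in> W - X. R u y}"
      define U1 where "U1 = C \<union> X"
      define U2 where "U2 = W - C"
      have uC: "u \<in> C" unfolding C_def R_def using uW by simp
      have wC: "w \<notin> C" unfolding C_def using nR by simp
      have split: "e \<subseteq> U1 \<or> e \<subseteq> U2" if eF: "e \<in> F" for e
      proof (rule ccontr)
        assume "\<not> (e \<subseteq> U1 \<or> e \<subseteq> U2)"
        then obtain a b where aC: "a \<in> e" "a \<in> C" and bN: "b \<in> e" "b \<notin> U1"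
          unfolding U1_def U2_def using Fprops[OF eF] by blast
        have "card e = 2" using Fprops[OF eF] by blast
        then obtain x y where exy: "e = {x,y}" "x \<noteq> y" by (meson card_2_iff)
        have ab: "a \<noteq> b" using aC bN unfolding U1_def by blast
        then have eab: "e = {a,b}" using exy aC bN by blast
        have bW: "b \<in> W - X" using bN Fprops[OF eF] unfolding U1_def by blast
        have aW: "a \<in> W - X" using aC unfolding C_def by blast
        have "e \<in> FX" unfolding FX_def delete_vertices_def using eF eab aW bW by blast
        then have "adj (W - X) FX a b" unfolding adj_def using aW bW eab by blast
        moreover have "R u a" using aC unfolding C_def by blast
        ultimately have "R u b" unfolding R_def by (meson rtranclp.rtrancl_into_rtrancl)
        then have "b \<in> C" unfolding C_def using bW by blast
        then show False using bN unfolding U1_def by blast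
      qed
      have CWX: "C \<subseteq> W - X" unfolding C_def by blast
      have U1W: "U1 \<subseteq> W" and U2W: "U2 \<subseteq> W" unfolding U1_def U2_def using CWX XW1 by auto
      have U1ne: "U1 \<noteq> W" using wW wC unfolding U1_def by blast
      have U2ne: "U2 \<noteq> W" using uC uW unfolding U2_def by blast
      have uU1: "u \<in> U1" using uC unfolding U1_def by blast
      have wU2: "w \<in> U2" using wC wW unfolding U2_def by blast
      have s1: "card U1 \<ge> 2*k \<and> real (card {e\<in>F. e \<subseteq> U1}) \<le> \<gamma> * (real (card U1) - real k)"
      proof (rule side[OF U1W U1ne uU1])
        fix e assume "e \<in> F" "u \<in> e"
        then show "e \<subseteq> U1" using split[of e] uC unfolding U2_def by blast
      qed
      have s2: "card U2 \<ge> 2*k \<and> real (card {e\<in>F. e \<subseteq> U2}) \<le> \<gamma> * (real (card U2) - real k)"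
      proof (rule side[OF U2W U2ne wU2])
        fix e assume "e \<in> F" "w \<in> e"
        then show "e \<subseteq> U2" using split[of e] wC wW unfolding U1_def by blast
      qed
      have "F = {e\<in>F. e \<subseteq> U1} \<union> {e\<in>F. e \<subseteq> U2}" using split by blast
      then have cF: "card F \<le> card {e\<in>F. e \<subseteq> U1} + card {e\<in>F. e \<subseteq> U2}"
        by (metis card_Un_le)
      have "U1 \<union> U2 = W" "U1 \<inter> U2 = X" unfolding U1_def U2_def using CWX XW1 by auto
      moreover have "card (U1 \<union> U2) + card (U1 \<inter> U2) = card U1 + card U2"
      proof -
        have fU1: "finite U1" using U1W fW finite_subset by blast
        have fU2: "finite U2" using U2W fW finite_subset by blast
        show ?thesis using card_Un_Int[OF fU1 fU2] by linarith
      qed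
      ultimately have cU: "card U1 + card U2 = card W + card X" by simp
      have cUr: "real (card U1) + real (card U2) = real (card W) + real (card X)"
      proof -
        have "real (card U1 + card U2) = real (card W + card X)" using cU by simp
        then show ?thesis by simp
      qed
      have "real (card F) \<le> \<gamma> * (real (card U1) - real k) + \<gamma> * (real (card U2) - real k)"
        using cF s1 s2 by linarith
      also have "\<dots> = \<gamma> * ((real (card U1) + real (card U2)) - 2 * real k)"
        by (simp add: algebra_simps)
      also have "\<dots> = \<gamma> * (real (card W) + real (card X) - 2 * real k)"
        using cUr by simp
      also have "\<dots> \<le> \<gamma> * (real (card W) - real k)"
        using cX g0 by (intro mult_left_mono) auto
      finally show False using FW by simp
    qed
  qed
  then show ?thesis using sub by blast
qed




lemma col_exists:
  assumes G: "graph V E"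
  shows "\<exists>c. proper_colouring V E (card V) c"
proof -
  have fV: "finite V" using G unfolding graph_def by blast
  obtain h where h: "bij_betw h V {0..<card V}" using ex_bij_betw_finite_nat[OF fV] by blast
  have "proper_colouring V E (card V) h"
    unfolding proper_colouring_def
  proof (intro conjI allI impI)
    show "h ` V \<subseteq> {..<card V}" using h unfolding bij_betw_def by auto
    fix u v assume uv: "{u, v} \<in> E \<and> u \<noteq> v"
    then have "u \<in> V" "v \<in> V" using G unfolding graph_def by auto
    then show "h u \<noteq> h v" using uv h unfolding bij_betw_def inj_on_def by blast
  qed
  then show ?thesis by blast
qed

lemma chi_le: "proper_colouring V E k c \<Longrightarrow> chi V E \<le> k"
  unfolding chi_def by (rule Least_le) blast

lemma chi_col:
  assumes "graph V E" shows "\<exists>c. proper_colouring V E (chi V E) c"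
proof -
  have "\<exists>k c. proper_colouring V E k c" using col_exists[OF assms] by blast
  then show ?thesis unfolding chi_def by (rule LeastI_ex)
qed

lemma chi_remove:
  assumes G: "graph V E" and vV: "v \<in> V"
  shows "chi V E \<le> max (chi (V - {v}) {e\<in>E. v \<notin> e}) (degE E v + 1)"
proof -
  define V' where "V' = V - {v}"
  define E' where "E' = {e\<in>E. v \<notin> e}"
  define m where "m = chi V' E'"
  define K where "K = max m (degE E v + 1)"
  have G': "graph V' E'" using G unfolding graph_def V'_def E'_def by auto
  obtain c' where c': "proper_colouring V' E' m c'" using chi_col[OF G'] unfolding m_def by blast
  define N where "N = {x. {v,x} \<in> E}"
  have fE: "finite E" using G graph_finE by blast
  have "card N \<le> card {e\<in>E. v \<in> e}"
  proof (rule card_inj_on_le)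
    show "inj_on (\<lambda>x. {v,x}) N" unfolding inj_on_def by (auto simp: doubleton_eq_iff)
    show "(\<lambda>x. {v,x}) ` N \<subseteq> {e\<in>E. v \<in> e}" unfolding N_def by auto
    show "finite {e\<in>E. v \<in> e}" using fE by simp
  qed
  moreover have "N \<subseteq> V" unfolding N_def using G unfolding graph_def by blast
  then have fN: "finite N" using G unfolding graph_def using finite_subset by blast
  ultimately have cN: "card (c' ` N) \<le> degE E v" unfolding degE_def
    using card_image_le[OF fN, of c'] by linarith
  have lt: "card (c' ` N) < card {..<K}" using cN unfolding K_def by simp
  have "\<not> {..<K} \<subseteq> c' ` N"
  proof
    assume "{..<K} \<subseteq> c' ` N"
    then have "card {..<K} \<le> card (c' ` N)" using fN by (intro card_mono) auto
    then show False using lt by linarith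
  qed
  then obtain col where col: "col < K" "col \<notin> c' ` N" by blast
  define c where "c = c'(v := col)"
  have "proper_colouring V E K c"
    unfolding proper_colouring_def
  proof (intro conjI allI impI)
    show "c ` V \<subseteq> {..<K}"
    proof
      fix y assume "y \<in> c ` V"
      then obtain x where x: "x \<in> V" "y = c x" by blast
      show "y \<in> {..<K}"
      proof (cases "x = v")
        case True then show ?thesis using x col unfolding c_def by simp
      next
        case False
        then have "x \<in> V'" using x unfolding V'_def by simp
        then have "c' x < m" using c' unfolding proper_colouring_def by auto
        then show ?thesis using x False unfolding c_def K_def by simp
      qed
    qed
    fix x y assume xy: "{x, y} \<in> E \<and> x \<noteq> y"
    show "c x \<noteq> c y"
    proof (cases "x = v")
      case True
      then have "y \<in> N" "y \<noteq> v" using xy unfolding N_def by auto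
      then show ?thesis using True col unfolding c_def by auto
    next
      case False
      show ?thesis
      proof (cases "y = v")
        case True
        then have "x \<in> N" using xy unfolding N_def by (auto simp: insert_commute)
        then show ?thesis using True False col unfolding c_def by auto
      next
        case False2: False
        then have "{x,y} \<in> E'" using xy False unfolding E'_def by auto
        then have "c' x \<noteq> c' y" using c' xy unfolding proper_colouring_def by blast
        then show ?thesis using False False2 unfolding c_def by simp
      qed
    qed
  qed
  then have "chi V E \<le> K" by (rule chi_le)
  then show ?thesis unfolding K_def m_def V'_def E'_def .
qed


lemma chi_dense_aux:
  "card V = n \<Longrightarrow> graph V E \<Longrightarrow> V \<noteq> {} \<Longrightarrow>
   \<exists>S. S \<subseteq> V \<and> S \<noteq> {} \<and> real (chi V E) - 1 \<le> 2 * density S {e\<in>E. e \<subseteq> S}"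
proof (induction n arbitrary: V E rule: less_induct)
  case (less n V E)
  have G: "graph V E" and ne: "V \<noteq> {}" using less by auto
  have fV: "finite V" using G unfolding graph_def by blast
  have n0: "card V > 0" using fV ne by (simp add: card_gt_0_iff)
  show ?case
  proof (cases "\<forall>v\<in>V. chi V E \<le> degE E v + 1")
    case True
    have EV: "{e\<in>E. e \<subseteq> V} = E" using G unfolding graph_def by blast
    have "(\<Sum>v\<in>V. chi V E - 1) \<le> (\<Sum>v\<in>V. degE E v)"
      by (rule sum_mono) (use True in force)
    then have "card V * (chi V E - 1) \<le> 2 * card E" using handshake[OF G] by simp
    then have "real (card V * (chi V E - 1)) \<le> real (2 * card E)" using of_nat_le_iff by blast
    then have h1: "real (card V) * real (chi V E - 1) \<le> 2 * real (card E)" by simp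
    have "real (chi V E) - 1 \<le> real (chi V E - 1)" by (cases "chi V E") auto
    then have "real (card V) * (real (chi V E) - 1) \<le> real (card V) * real (chi V E - 1)"
      by (intro mult_left_mono) auto
    then have "(real (chi V E) - 1) * real (card V) \<le> 2 * real (card E)" using h1 by (simp add: mult.commute)
    then have "real (chi V E) - 1 \<le> 2 * real (card E) / real (card V)"
      using n0 by (simp add: pos_le_divide_eq)
    then have "real (chi V E) - 1 \<le> 2 * density V E" unfolding density_def by simp
    then show ?thesis using EV ne by auto
  next
    case False
    then obtain v where vV: "v \<in> V" and dv: "degE E v + 1 < chi V E" by force
    define V' where "V' = V - {v}"
    define E' where "E' = {e\<in>E. v \<notin> e}"
    have G': "graph V' E'" using G unfolding graph_def V'_def E'_def by auto
    have cr: "chi V E \<le> max (chi V' E') (degE E v + 1)" unfolding V'_def E'_def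
      by (rule chi_remove[OF G vV])
    then have cle: "chi V E \<le> chi V' E'" using dv by linarith
    have ne': "V' \<noteq> {}"
    proof
      assume e: "V' = {}"
      have "proper_colouring V' E' 0 (\<lambda>_. 0)"
        unfolding proper_colouring_def
      proof (intro conjI allI impI)
        show "(\<lambda>_. 0) ` V' \<subseteq> {..<0::nat}" using e by simp
        fix x y assume "{x, y} \<in> E' \<and> x \<noteq> y"
        then have "{x,y} \<subseteq> V'" using G' unfolding graph_def by blast
        then show "(0::nat) \<noteq> 0" using e by simp
      qed
      then have "chi V' E' \<le> 0" by (rule chi_le)
      then show False using cle dv by linarith
    qed
    have "card V' < n" using less.prems(1) n0 vV fV unfolding V'_def by simp
    then obtain S where S: "S \<subseteq> V'" "S \<noteq> {}"
      and Sd: "real (chi V' E') - 1 \<le> 2 * density S {e\<in>E'. e \<subseteq> S}"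
      using less.IH[OF _ refl G' ne'] by blast
    have "{e\<in>E'. e \<subseteq> S} = {e\<in>E. e \<subseteq> S}" using S(1) unfolding E'_def V'_def by blast
    then have "real (chi V E) - 1 \<le> 2 * density S {e\<in>E. e \<subseteq> S}" using Sd cle by simp
    then show ?thesis using S unfolding V'_def by blast
  qed
qed




lemma kappa_ge:
  assumes "k_connected W F k" shows "k \<le> kappa W F"
proof -
  have "bdd_above {k. k_connected W F k}"
    unfolding bdd_above_def k_connected_def by (rule exI[of _ "card W"]) auto
  then show ?thesis unfolding kappa_def using assms by (intro cSup_upper) auto
qed

lemma bip_sub:
  assumes "bipartite V E" "subgraph W F V E" shows "bipartite W F"
proof -
  obtain A B where AB: "A \<inter> B = {}" "A \<union> B = V" "\<forall>e\<in>E. card (e \<inter> A) = 1 \<and> card (e \<inter> B) = 1"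
    using assms(1) unfolding bipartite_def by blast
  have WV: "W \<subseteq> V" and FE: "F \<subseteq> E" and FW: "\<forall>e\<in>F. e \<subseteq> W"
    using assms(2) unfolding subgraph_def graph_def by auto
  show ?thesis unfolding bipartite_def
  proof (intro exI conjI ballI)
    show "(A \<inter> W) \<inter> (B \<inter> W) = {}" using AB by blast
    show "(A \<inter> W) \<union> (B \<inter> W) = W" using AB WV by blast
    fix e assume e: "e \<in> F"
    then have "e \<inter> (A \<inter> W) = e \<inter> A" "e \<inter> (B \<inter> W) = e \<inter> B" using FW by auto
    then show "card (e \<inter> (A \<inter> W)) = 1" "card (e \<inter> (B \<inter> W)) = 1" using AB(3) FE e by auto
  qed
qed

lemma subgraph_trans:
  "subgraph W F V E \<Longrightarrow> subgraph V E V0 E0 \<Longrightarrow> subgraph W F V0 E0"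
  unfolding subgraph_def by blast

lemma one_edge:
  assumes G: "graph V E" and eE: "e \<in> E"
  shows "subgraph e {e} V E \<and> bipartite e {e} \<and> 1 \<le> kappa e {e}"
proof -
  have ce: "card e = 2" and eV: "e \<subseteq> V" using G eE unfolding graph_def by auto
  then obtain a b where ab: "e = {a,b}" "a \<noteq> b" by (meson card_2_iff)
  have "subgraph e {e} V E" unfolding subgraph_def graph_def using ce eV eE ab by auto
  moreover have "bipartite e {e}" unfolding bipartite_def
  proof (intro exI conjI ballI)
    show "{a} \<inter> {b} = {}" "{a} \<union> {b} = e" using ab by auto
    fix f assume "f \<in> {e}"
    then have "f \<inter> {a} = {a}" "f \<inter> {b} = {b}" using ab by auto
    then show "card (f \<inter> {a}) = 1" "card (f \<inter> {b}) = 1" by auto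
  qed
  moreover have "k_connected e {e} 1" unfolding k_connected_def
  proof (intro conjI allI impI)
    show "1 < card e" using ce by simp
    fix X assume X: "X \<subseteq> e \<and> card X < 1"
    then have "X = {}" using ab by (metis card_0_eq finite.emptyI finite.insertI finite_subset less_one)
    then have D: "delete_vertices e {e} X = {e}" unfolding delete_vertices_def by auto
    have "connected e {e}"
      unfolding connected_def
    proof (intro conjI ballI)
      show "e \<noteq> {}" using ab by simp
      fix u v assume uv: "u \<in> e" "v \<in> e"
      show "(adj e {e})\<^sup>*\<^sup>* u v"
      proof (cases "u = v")
        case True then show ?thesis by simp
      next
        case False
        then have "{u,v} = e" using uv ab by auto
        then have "adj e {e} u v" unfolding adj_def using uv by simp
        then show ?thesis by simp
      qed
    qed
    then show "connected (e - X) (delete_vertices e {e} X)" using D \<open>X = {}\<close> by simp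
  qed
  then have "1 \<le> kappa e {e}" by (rule kappa_ge)
  ultimately show ?thesis by blast
qed

lemma mainM:
  assumes G: "graph V E" and ne: "V \<noteq> {}"
  shows "\<exists>VH EH. subgraph VH EH V E \<and> bipartite VH EH \<and> real (kappa VH EH) \<ge> density V E / 4"
proof -
  have fV: "finite V" using G unfolding graph_def by blast
  have n0: "card V > 0" using fV ne by (simp add: card_gt_0_iff)
  obtain A where AV: "A \<subseteq> V" and cA: "card E \<le> 2 * card (cutE E A)" using maxcut[OF G] by blast
  define C where "C = cutE E A"
  have CE: "C \<subseteq> E" unfolding C_def cutE_def by blast
  have GC: "graph V C" using graph_subE[OF G CE] .
  have bC: "bipartite V C" unfolding C_def by (rule cut_bipartite[OF G AV])
  have subC: "subgraph V C V E" unfolding subgraph_def using GC CE by blast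
  define \<gamma> where "\<gamma> = real (card C) / real (card V)"
  have dens: "real (card C) = \<gamma> * real (card V)" unfolding \<gamma>_def using n0 by simp
  have "real (card E) \<le> 2 * real (card C)" using cA unfolding C_def
    by (metis of_nat_le_iff of_nat_mult of_nat_numeral)
  then have dE: "density V E \<le> 2 * \<gamma>" unfolding density_def \<gamma>_def using n0
    by (simp add: divide_right_mono)
  show ?thesis
  proof (cases "\<gamma> \<ge> 2")
    case True
    define k where "k = nat \<lfloor>\<gamma> / 2\<rfloor>"
    have k1: "k \<ge> 1" unfolding k_def using True by linarith
    have gk: "2 * real k \<le> \<gamma>" unfolding k_def using True by linarith
    have gk2: "\<gamma> / 2 < real k + 1" unfolding k_def using True by linarith
    obtain W F where sub: "subgraph W F V C" and kc: "k_connected W F (k+1)"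
      using mader[OF GC ne k1 dens gk] by blast
    have "subgraph W F V E" using subgraph_trans[OF sub subC] .
    moreover have "bipartite W F" using bip_sub[OF bC sub] .
    moreover have "real (kappa W F) \<ge> density V E / 4"
    proof -
      have "k + 1 \<le> kappa W F" by (rule kappa_ge[OF kc])
      then have "real k + 1 \<le> real (kappa W F)" by linarith
      then show ?thesis using gk2 dE by linarith
    qed
    ultimately show ?thesis by blast
  next
    case False
    show ?thesis
    proof (cases "E = {}")
      case True
      have "subgraph V {} V E" unfolding subgraph_def graph_def using fV by simp
      moreover have "bipartite V {}" unfolding bipartite_def by blast
      moreover have "density V E = 0" unfolding density_def using True by simp
      ultimately show ?thesis by force
    next
      case Ene: False
      then obtain e where eE: "e \<in> E" by blast
      have "density V E / 4 \<le> 1" using dE False by linarith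
      then show ?thesis using one_edge[OF G eE] by fastforce
    qed
  qed
qed

theorem corollary3p2:
  fixes V :: "'a set" and E :: "'a set set"
  assumes "graph V E" and "V \<noteq> {}"
  shows "\<exists>VH EH. subgraph VH EH V E \<and> bipartite VH EH \<and>
           real (kappa VH EH) \<ge> max (density V E / 4) ((real (chi V E) - 1) / 8)"
proof -
  obtain V1 E1 where h1: "subgraph V1 E1 V E" "bipartite V1 E1" "real (kappa V1 E1) \<ge> density V E / 4"
    using mainM[OF assms] by blast
  obtain S where S: "S \<subseteq> V" "S \<noteq> {}"
    and Sd: "real (chi V E) - 1 \<le> 2 * density S {e\<in>E. e \<subseteq> S}"
    using chi_dense_aux[OF refl assms(1,2)] by blast
  have fV: "finite V" using assms(1) unfolding graph_def by blast
  have GS: "graph S {e\<in>E. e \<subseteq> S}" unfolding graph_def using assms(1) S fV finite_subset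
    unfolding graph_def by blast
  have subS: "subgraph S {e\<in>E. e \<subseteq> S} V E" unfolding subgraph_def using GS S by blast
  obtain V2 E2 where h2: "subgraph V2 E2 S {e\<in>E. e \<subseteq> S}" "bipartite V2 E2"
    "real (kappa V2 E2) \<ge> density S {e\<in>E. e \<subseteq> S} / 4"
    using mainM[OF GS S(2)] by blast
  have h2': "subgraph V2 E2 V E" using subgraph_trans[OF h2(1) subS] .
  define dS where "dS = density S {e\<in>E. e \<subseteq> S}"
  have k2: "real (kappa V2 E2) \<ge> (real (chi V E) - 1) / 8"
  proof -
    have "(real (chi V E) - 1) / 8 \<le> (2 * dS) / 8" using Sd unfolding dS_def by (rule divide_right_mono) simp
    also have "\<dots> = dS / 4" by simp
    also have "\<dots> \<le> real (kappa V2 E2)" using h2(3) unfolding dS_def .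
    finally show ?thesis .
  qed
  show ?thesis
  proof (cases "density V E / 4 \<le> (real (chi V E) - 1) / 8")
    case True
    then show ?thesis using h2' h2(2) k2 by (intro exI[of _ V2] exI[of _ E2]) auto
  next
    case False
    then show ?thesis using h1 by (intro exI[of _ V1] exI[of _ E1]) auto
  qed
qed


end
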